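(* Let $1\le D\le K-1$ and let $\mathbf{L}$ be the $(K,D)$ AIR matrix. Let $\mathbf{L}(j,k)=1$ with the entry $(j,k)$ lying in the even submatrix $\mathbf{I}_{\lambda_{2i}\times\beta_{2i}\lambda_{2i}}$, and let $j_R=j-(K-\lambda_{2i})$ and $k_R=k-(K-D-\lambda_{2i-1})$ be its row and column offsets within that submatrix. (1) If $i\in[0:\lfloor l/2\rfloor]$ and $k_R\in[0:(\beta_{2i}-1)\lambda_{2i}-1]$, then $d_{right}(j,k)=\lambda_{2i}$. (2) If $i\in[0:\lfloor l/2\rfloor-1]$, $k_R\in[(\beta_{2i}-1)\lambda_{2i}:\beta_{2i}\lambda_{2i}-1]$, and $j_R=c\lambda_{2i+1}+d$ with integers $c\ge0$, $0\le d<\lambda_{2i+1}$, then $d_{right}(j,k)=\lambda_{2i}-c\lambda_{2i+1}$.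
   Context: Notation: $[a:b]=\{a,\dots,b\}$. Let $K,D$ be integers with $1\le D\le K-1$. Define $\lambda_{-1}=K-D$, $\lambda_0=D$ and recursively, by Euclidean division, $\lambda_{i-1}=\beta_i\lambda_i+\lambda_{i+1}$ with $0\le\lambda_{i+1}<\lambda_i$, for $i=0,1,2,\dots$, stopping at the index $l\ge0$ with $\lambda_{l+1}=0$; $\beta_0\ge0$ may be $0$, $\beta_i\ge1$ for $i\ge1$. Set $\lambda_j=0$ for $j>l$. For $n\mid m$, $\mathbf{I}_{m\times n}$ is $m/n$ copies of the $n\times n$ identity stacked vertically and $\mathbf{I}_{n\times m}$ its transpose. The $(K,D)$ AIR matrix $\mathbf{L}$ is the $K\times(K-D)$ $0/1$ matrix (rows $[0:K-1]$, columns $[0:K-D-1]$) that is zero except in the blocks: the $(K-D)\times(K-D)$ identity in rows and columns $[0:K-D-1]$; for $0\le 2i\le l$, the even submatrix $\mathbf{I}_{\lambda_{2i}\times\beta_{2i}\lambda_{2i}}$ in rows $[K-\lambda_{2i}:K-1]$, columns $[K-D-\lambda_{2i-1}:K-D-\lambda_{2i+1}-1]$ (absent if $i=0,\beta_0=0$); for $1\le 2i+1\le l$, the odd submatrix $\mathbf{I}_{\beta_{2i+1}\lambda_{2i+1}\times\lambda_{2i+1}}$ in rows $[K-\lambda_{2i}:K-\lambda_{2i+2}-1]$, columns $[K-D-\lambda_{2i+1}:K-D-1]$. Right-distance: for $\mathbf{L}(j,k)=1$ with $(j,k)$ in an even submatrix, let $k'$ be the smallest column index with $k'>k$ and $\mathbf{L}(j,k')=1$;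 then $d_{right}(j,k)=k'-k$. *)

theory Defs
  imports Main
begin

text \<open>Euclidean remainder sequence: lamS K D n = lambda_(n-1), i.e.
  lamS 0 = K - D (= lambda_(-1)), lamS 1 = D (= lambda_0),
  lambda_(i+1) = lambda_(i-1) mod lambda_i, and lambda_j = 0 once a zero occurred.\<close>
fun lamS :: "nat \<Rightarrow> nat \<Rightarrow> nat \<Rightarrow> nat" where
  "lamS K D 0 = K - D"
| "lamS K D (Suc 0) = D"
| "lamS K D (Suc (Suc n)) =
     (if lamS K D (Suc n) = 0 then 0 else lamS K D n mod lamS K D (Suc n))"

definition lam :: "nat \<Rightarrow> nat \<Rightarrow> int \<Rightarrow> nat" where
  "lam K D i = lamS K D (nat (i + 1))"

text \<open>beta_i = quotient in lambda_(i-1) = beta_i lambda_i + lambda_(i+1).\<close>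
definition beta :: "nat \<Rightarrow> nat \<Rightarrow> nat \<Rightarrow> nat" where
  "beta K D i = lam K D (int i - 1) div lam K D (int i)"

definition lidx :: "nat \<Rightarrow> nat \<Rightarrow> nat" where
  "lidx K D = (LEAST l. lam K D (int l + 1) = 0)"

text \<open>Even submatrix I_(lam x beta lam): local entry (r,c) is 1 iff c mod lam = r.
  Odd submatrix I_(beta lam x lam): local entry (r,c) is 1 iff r mod lam = c.\<close>
definition air :: "nat \<Rightarrow> nat \<Rightarrow> nat \<Rightarrow> nat \<Rightarrow> nat" where
  "air K D j k = of_bool (j < K \<and> k < K - D \<and>
     ((j < K - D \<and> k = j)
    \<or> (\<exists>i::nat. 2 * i \<le> lidx K D
         \<and> K - lam K D (2 * int i) \<le> j
         \<and> K - D - lam K D (2 * int i - 1) \<le> k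
         \<and> k < K - D - lam K D (2 * int i + 1)
         \<and> (k - (K - D - lam K D (2 * int i - 1))) mod lam K D (2 * int i)
             = j - (K - lam K D (2 * int i)))
    \<or> (\<exists>i::nat. 2 * i + 1 \<le> lidx K D
         \<and> K - lam K D (2 * int i) \<le> j
         \<and> j < K - lam K D (2 * int i + 2)
         \<and> K - D - lam K D (2 * int i + 1) \<le> k
         \<and> (j - (K - lam K D (2 * int i))) mod lam K D (2 * int i + 1)
             = k - (K - D - lam K D (2 * int i + 1)))))"

definition dright :: "nat \<Rightarrow> nat \<Rightarrow> nat \<Rightarrow> nat \<Rightarrow> nat" where
  "dright K D j k = (LEAST k'. k < k' \<and> air K D j k' = 1) - k"

end

theory Submission imports Defs begin
declare lamS.simps(3)[simp del]
lemma lamS_SS: "lamS K D (Suc (Suc n)) = (if lamS K D (Suc n) = 0 then 0 else lamS K D n mod lamS K D (Suc n))"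
  by (rule lamS.simps(3))
lemma lamS_le2: "lamS K D (Suc (Suc n)) \<le> lamS K D n"
  by (simp add: lamS_SS)
lemma lamS_mod: "lamS K D (Suc n) > 0 \<Longrightarrow> lamS K D (Suc (Suc n)) = lamS K D n mod lamS K D (Suc n)"
  by (simp add: lamS_SS)
lemma lamS_anti_aux: "lamS K D (m + 2*t) \<le> lamS K D m"
proof (induction t)
  case 0 then show ?case by simp
next
  case (Suc t)
  have "lamS K D (m + 2*Suc t) = lamS K D (Suc (Suc (m + 2*t)))" by simp
  also have "... \<le> lamS K D (m+2*t)" by (rule lamS_le2)
  finally show ?case using Suc.IH by simp
qed
lemma lamS_anti: "m \<le> n \<Longrightarrow> lamS K D (2*n + r) \<le> lamS K D (2*m + r)"
proof -
  assume "m \<le> n"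
  then obtain t where "n = m + t" using le_Suc_ex by blast
  then have "2*n+r = (2*m+r) + 2*t" by simp
  then show ?thesis using lamS_anti_aux[of K D "2*m+r" t] by (simp add: add.commute add.left_commute)
qed
lemma lamS_bound: "lamS K D (Suc n) = 0 \<or> lamS K D (Suc n) + n \<le> D"
proof (induction n)
  case 0 then show ?case by simp
next
  case (Suc n)
  show ?case
  proof (cases "lamS K D (Suc n) = 0")
    case True then show ?thesis by (simp add: lamS_SS)
  next
    case False
    then have "lamS K D n mod lamS K D (Suc n) < lamS K D (Suc n)" by simp
    then have "lamS K D n mod lamS K D (Suc n) + Suc n \<le> D" using False Suc.IH by linarith
    then show ?thesis using False by (simp add: lamS_SS)
  qed
qed
lemma lamS_D: "lamS K D (Suc (Suc D)) = 0"
  using lamS_bound[of K D "Suc D"] by simp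
lemma lam_l1: "lam K D (int l + 1) = lamS K D (Suc (Suc l))"
  by (simp add: lam_def nat_add_distrib)
lemma lidx_zero: "lamS K D (Suc (Suc (lidx K D))) = 0"
  unfolding lidx_def lam_l1 by (rule LeastI[of _ D]) (rule lamS_D)
lemma lidx_pos: assumes "0 < D" "D < K" "n \<le> lidx K D + 1" shows "0 < lamS K D n"
proof (cases n)
  case 0 then show ?thesis using assms by simp
next
  case (Suc m)
  show ?thesis
  proof (cases m)
    case 0 then show ?thesis using assms Suc by simp
  next
    case (Suc p)
    have "p < lidx K D" using assms \<open>n = Suc m\<close> Suc by simp
    then have "lam K D (int p + 1) \<noteq> 0" unfolding lidx_def by (rule not_less_Least)
    then show ?thesis using \<open>n = Suc m\<close> Suc by (simp add: lam_l1)
  qed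
qed
lemma lam_e[simp]: "lam K D (2 * int i) = lamS K D (Suc (2*i))"
  by (simp add: lam_def nat_add_distrib nat_mult_distrib)
lemma lam_em[simp]: "lam K D (2 * int i - 1) = lamS K D (2*i)"
  by (simp add: lam_def nat_add_distrib nat_mult_distrib)
lemma lam_o[simp]: "lam K D (2 * int i + 1) = lamS K D (Suc (Suc (2*i)))"
  by (simp add: lam_def nat_add_distrib nat_mult_distrib)
lemma lam_o2[simp]: "lam K D (2 * int i + 2) = lamS K D (Suc (Suc (Suc (2*i))))"
proof -
  have "nat (2 * int i + 2 + 1) = Suc (Suc (Suc (2*i)))" by simp
  then show ?thesis by (simp add: lam_def)
qed
lemma beta_e: "beta K D (2*i) = lamS K D (2*i) div lamS K D (Suc (2*i))"
  unfolding beta_def by (metis lam_e lam_em of_nat_mult of_nat_numeral)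
lemma anti0: "m \<le> n \<Longrightarrow> lamS K D (2*n) \<le> lamS K D (2*m)"
  using lamS_anti[of m n K D 0] by simp
lemma anti1: "m \<le> n \<Longrightarrow> lamS K D (Suc (2*n)) \<le> lamS K D (Suc (2*m))"
  using lamS_anti[of m n K D 1] by simp

lemma air_unf: "air K D j k = of_bool (j < K \<and> k < K - D \<and>
     ((j < K - D \<and> k = j)
    \<or> (\<exists>i::nat. 2 * i \<le> lidx K D
         \<and> K - lamS K D (Suc (2*i)) \<le> j
         \<and> K - D - lamS K D (2*i) \<le> k
         \<and> k < K - D - lamS K D (Suc (Suc (2*i)))
         \<and> (k - (K - D - lamS K D (2*i))) mod lamS K D (Suc (2*i))
             = j - (K - lamS K D (Suc (2*i))))
    \<or> (\<exists>i::nat. 2 * i + 1 \<le> lidx K D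
         \<and> K - lamS K D (Suc (2*i)) \<le> j
         \<and> j < K - lamS K D (Suc (Suc (Suc (2*i))))
         \<and> K - D - lamS K D (Suc (Suc (2*i))) \<le> k
         \<and> (j - (K - lamS K D (Suc (2*i)))) mod lamS K D (Suc (Suc (2*i)))
             = k - (K - D - lamS K D (Suc (Suc (2*i)))))))"
  unfolding air_def by simp

lemma air_one: "air K D j k = 1 \<longleftrightarrow> (j < K \<and> k < K - D \<and>
     ((j < K - D \<and> k = j)
    \<or> (\<exists>i::nat. 2 * i \<le> lidx K D
         \<and> K - lamS K D (Suc (2*i)) \<le> j
         \<and> K - D - lamS K D (2*i) \<le> k
         \<and> k < K - D - lamS K D (Suc (Suc (2*i)))
         \<and> (k - (K - D - lamS K D (2*i))) mod lamS K D (Suc (2*i))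
             = j - (K - lamS K D (Suc (2*i))))
    \<or> (\<exists>i::nat. 2 * i + 1 \<le> lidx K D
         \<and> K - lamS K D (Suc (2*i)) \<le> j
         \<and> j < K - lamS K D (Suc (Suc (Suc (2*i))))
         \<and> K - D - lamS K D (Suc (Suc (2*i))) \<le> k
         \<and> (j - (K - lamS K D (Suc (2*i)))) mod lamS K D (Suc (Suc (2*i)))
             = k - (K - D - lamS K D (Suc (Suc (2*i)))))))"
  by (simp add: air_unf)

lemma airE:
  assumes "2*i \<le> lidx K D"
    "K - lamS K D (Suc(2*i)) \<le> j" "j < K"
    "K - D - lamS K D (2*i) \<le> x" "x < K - D - lamS K D (Suc (Suc (2*i)))"
  shows "air K D j x = 1 \<longleftrightarrow> (x - (K-D-lamS K D (2*i))) mod lamS K D (Suc (2*i)) = j - (K - lamS K D (Suc(2*i)))"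
proof
  have j1: "K - D \<le> j" using anti1[of 0 i K D] assms(2) by simp
  assume "air K D j x = 1"
  then have A: "(\<exists>i'::nat. 2 * i' \<le> lidx K D
         \<and> K - lamS K D (Suc (2*i')) \<le> j
         \<and> K - D - lamS K D (2*i') \<le> x
         \<and> x < K - D - lamS K D (Suc (Suc (2*i')))
         \<and> (x - (K - D - lamS K D (2*i'))) mod lamS K D (Suc (2*i'))
             = j - (K - lamS K D (Suc (2*i'))))
    \<or> (\<exists>i'::nat. 2 * i' + 1 \<le> lidx K D
         \<and> K - lamS K D (Suc (2*i')) \<le> j
         \<and> j < K - lamS K D (Suc (Suc (Suc (2*i'))))
         \<and> K - D - lamS K D (Suc (Suc (2*i'))) \<le> x
         \<and> (j - (K - lamS K D (Suc (2*i')))) mod lamS K D (Suc (Suc (2*i')))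
             = x - (K - D - lamS K D (Suc (Suc (2*i')))))"
    using j1 unfolding air_one by (metis not_le)
  then show "(x - (K-D-lamS K D (2*i))) mod lamS K D (Suc (2*i)) = j - (K - lamS K D (Suc(2*i)))"
  proof
    assume "\<exists>i'::nat. 2 * i' \<le> lidx K D
         \<and> K - lamS K D (Suc (2*i')) \<le> j
         \<and> K - D - lamS K D (2*i') \<le> x
         \<and> x < K - D - lamS K D (Suc (Suc (2*i')))
         \<and> (x - (K - D - lamS K D (2*i'))) mod lamS K D (Suc (2*i'))
             = j - (K - lamS K D (Suc (2*i')))"
    then obtain i' where H: "K - D - lamS K D (2*i') \<le> x"
         "x < K - D - lamS K D (Suc (Suc (2*i')))"
         "(x - (K - D - lamS K D (2*i'))) mod lamS K D (Suc (2*i'))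
             = j - (K - lamS K D (Suc (2*i')))" by blast
    have "i' = i"
    proof (rule ccontr)
      assume "i' \<noteq> i"
      then consider "Suc i' \<le> i" | "Suc i \<le> i'" by linarith
      then show False
      proof cases
        case 1
        then have "lamS K D (2*i) \<le> lamS K D (2*Suc i')" by (rule anti0)
        then show False using H assms by simp
      next
        case 2
        then have "lamS K D (2*i') \<le> lamS K D (2*Suc i)" by (rule anti0)
        then show False using H assms by simp
      qed
    qed
    then show ?thesis using H by simp
  next
    assume "\<exists>i'::nat. 2 * i' + 1 \<le> lidx K D
         \<and> K - lamS K D (Suc (2*i')) \<le> j
         \<and> j < K - lamS K D (Suc (Suc (Suc (2*i'))))
         \<and> K - D - lamS K D (Suc (Suc (2*i'))) \<le> x
         \<and> (j - (K - lamS K D (Suc (2*i')))) mod lamS K D (Suc (Suc (2*i')))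
             = x - (K - D - lamS K D (Suc (Suc (2*i'))))"
    then obtain i' where H: "j < K - lamS K D (Suc (Suc (Suc (2*i'))))"
         "K - D - lamS K D (Suc (Suc (2*i'))) \<le> x" by blast
    consider "i \<le> i'" | "Suc i' \<le> i" by linarith
    then show ?thesis
    proof cases
      case 1
      then have "lamS K D (2*Suc i') \<le> lamS K D (2*Suc i)" by (intro anti0) simp
      then show ?thesis using H assms by simp
    next
      case 2
      then have "lamS K D (Suc (2*i)) \<le> lamS K D (Suc (2*Suc i'))" by (rule anti1)
      then show ?thesis using H assms by simp
    qed
  qed
next
  assume "(x - (K-D-lamS K D (2*i))) mod lamS K D (Suc (2*i)) = j - (K - lamS K D (Suc(2*i)))"
  then show "air K D j x = 1" unfolding air_one using assms
    by (intro conjI disjI2 disjI1 exI[of _ i]) auto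
qed

lemma airO:
  assumes "2*i+1 \<le> lidx K D"
    "K - lamS K D (Suc(2*i)) \<le> j" "j < K - lamS K D (Suc (Suc (Suc (2*i))))"
    "K - D - lamS K D (Suc (Suc (2*i))) \<le> x" "x < K - D"
  shows "air K D j x = 1 \<longleftrightarrow> (j - (K - lamS K D (Suc (2*i)))) mod lamS K D (Suc (Suc (2*i)))
             = x - (K - D - lamS K D (Suc (Suc (2*i))))"
proof
  have j1: "K - D \<le> j" using anti1[of 0 i K D] assms(2) by simp
  assume "air K D j x = 1"
  then have A: "(\<exists>i'::nat. 2 * i' \<le> lidx K D
         \<and> K - lamS K D (Suc (2*i')) \<le> j
         \<and> K - D - lamS K D (2*i') \<le> x
         \<and> x < K - D - lamS K D (Suc (Suc (2*i')))
         \<and> (x - (K - D - lamS K D (2*i'))) mod lamS K D (Suc (2*i'))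
             = j - (K - lamS K D (Suc (2*i'))))
    \<or> (\<exists>i'::nat. 2 * i' + 1 \<le> lidx K D
         \<and> K - lamS K D (Suc (2*i')) \<le> j
         \<and> j < K - lamS K D (Suc (Suc (Suc (2*i'))))
         \<and> K - D - lamS K D (Suc (Suc (2*i'))) \<le> x
         \<and> (j - (K - lamS K D (Suc (2*i')))) mod lamS K D (Suc (Suc (2*i')))
             = x - (K - D - lamS K D (Suc (Suc (2*i')))))"
    using j1 unfolding air_one by (metis not_le)
  then show "(j - (K - lamS K D (Suc (2*i)))) mod lamS K D (Suc (Suc (2*i)))
             = x - (K - D - lamS K D (Suc (Suc (2*i))))"
  proof
    assume "\<exists>i'::nat. 2 * i' \<le> lidx K D
         \<and> K - lamS K D (Suc (2*i')) \<le> j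
         \<and> K - D - lamS K D (2*i') \<le> x
         \<and> x < K - D - lamS K D (Suc (Suc (2*i')))
         \<and> (x - (K - D - lamS K D (2*i'))) mod lamS K D (Suc (2*i'))
             = j - (K - lamS K D (Suc (2*i')))"
    then obtain i' where H: "K - lamS K D (Suc (2*i')) \<le> j"
         "x < K - D - lamS K D (Suc (Suc (2*i')))" by blast
    consider "i' \<le> i" | "Suc i \<le> i'" by linarith
    then show ?thesis
    proof cases
      case 1
      then have "lamS K D (2*Suc i) \<le> lamS K D (2*Suc i')" by (intro anti0) simp
      then show ?thesis using H assms by simp
    next
      case 2
      then have "lamS K D (Suc (2*i')) \<le> lamS K D (Suc (2*Suc i))" by (rule anti1)
      then show ?thesis using H assms by simp
    qed
  next
    assume "\<exists>i'::nat. 2 * i' + 1 \<le> lidx K D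
         \<and> K - lamS K D (Suc (2*i')) \<le> j
         \<and> j < K - lamS K D (Suc (Suc (Suc (2*i'))))
         \<and> K - D - lamS K D (Suc (Suc (2*i'))) \<le> x
         \<and> (j - (K - lamS K D (Suc (2*i')))) mod lamS K D (Suc (Suc (2*i')))
             = x - (K - D - lamS K D (Suc (Suc (2*i'))))"
    then obtain i' where H: "K - lamS K D (Suc (2*i')) \<le> j"
         "j < K - lamS K D (Suc (Suc (Suc (2*i'))))"
         "(j - (K - lamS K D (Suc (2*i')))) mod lamS K D (Suc (Suc (2*i')))
             = x - (K - D - lamS K D (Suc (Suc (2*i'))))" by blast
    have "i' = i"
    proof (rule ccontr)
      assume "i' \<noteq> i"
      then consider "Suc i' \<le> i" | "Suc i \<le> i'" by linarith
      then show False
      proof cases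
        case 1
        then have "lamS K D (Suc (2*i)) \<le> lamS K D (Suc (2*Suc i'))" by (rule anti1)
        then show False using H assms by simp
      next
        case 2
        then have "lamS K D (Suc (2*i')) \<le> lamS K D (Suc (2*Suc i))" by (rule anti1)
        then show False using H assms by simp
      qed
    qed
    then show ?thesis using H by simp
  qed
next
  assume "(j - (K - lamS K D (Suc (2*i)))) mod lamS K D (Suc (Suc (2*i)))
             = x - (K - D - lamS K D (Suc (Suc (2*i))))"
  then show "air K D j x = 1" unfolding air_one using assms
    by (intro conjI disjI2 exI[of _ i]) auto
qed

lemma mod_shift: "0 < t \<Longrightarrow> t < (b::nat) \<Longrightarrow> (n + t) mod b \<noteq> n mod b"
proof
  assume t: "0 < t" "t < b" and eq: "(n + t) mod b = n mod b"
  then have "b dvd (n + t - n)" using mod_eq_dvd_iff_nat[of n "n+t" b] by simp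
  then have "b dvd t" by simp
  then show False using t dvd_imp_le by fastforce
qed

theorem lemma3:
  fixes K D j k i :: nat
  defines "jR \<equiv> j - (K - lam K D (2 * int i))"
    and "kR \<equiv> k - (K - D - lam K D (2 * int i - 1))"
  assumes "1 \<le> D" and "D \<le> K - 1"
    and "air K D j k = 1"
    and "2 * i \<le> lidx K D"
    and "K - lam K D (2 * int i) \<le> j" and "j \<le> K - 1"
    and "K - D - lam K D (2 * int i - 1) \<le> k" and "k < K - D - lam K D (2 * int i + 1)"
  shows "(i \<le> lidx K D div 2 \<and> kR < (beta K D (2 * i) - 1) * lam K D (2 * int i) \<longrightarrow>
            (\<exists>k'. k < k' \<and> air K D j k' = 1) \<and> dright K D j k = lam K D (2 * int i))
       \<and> (\<forall>c d :: nat. i + 1 \<le> lidx K D div 2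
            \<and> (beta K D (2 * i) - 1) * lam K D (2 * int i) \<le> kR
            \<and> kR < beta K D (2 * i) * lam K D (2 * int i)
            \<and> jR = c * lam K D (2 * int i + 1) + d \<and> d < lam K D (2 * int i + 1) \<longrightarrow>
            (\<exists>k'. k < k' \<and> air K D j k' = 1) \<and>
            int (dright K D j k) = int (lam K D (2 * int i)) - int c * int (lam K D (2 * int i + 1)))"
proof -
  define a where "a = lamS K D (2*i)"
  define b where "b = lamS K D (Suc (2*i))"
  define e where "e = lamS K D (Suc (Suc (2*i)))"
  define f where "f = lamS K D (Suc (Suc (Suc (2*i))))"
  have lb: "lam K D (2 * int i) = b" by (simp add: b_def)
  have la: "lam K D (2 * int i - 1) = a" by (simp add: a_def)
  have le: "lam K D (2 * int i + 1) = e" by (simp add: e_def)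
  have bet: "beta K D (2*i) = a div b" by (simp add: beta_e a_def b_def)
  have DK: "D < K" "0 < D" using assms by auto
  have bpos: "0 < b" unfolding b_def using lidx_pos[OF DK(2) DK(1)] assms by simp
  have aKD: "a \<le> K - D" unfolding a_def using anti0[of 0 i K D] by simp
  have bD: "b \<le> D" unfolding b_def using anti1[of 0 i K D] by simp
  have ea: "e = a mod b" unfolding e_def a_def using lamS_mod bpos b_def by simp
  have adec: "a = (a div b) * b + e" using ea by simp
  have jK: "j < K" using assms DK by simp
  have jR: "jR = j - (K - b)" "jR < b" using jK assms(7) bD DK unfolding jR_def lb by auto
  have kR: "kR = k - (K - D - a)" unfolding kR_def la ..
  have krange: "K - D - a \<le> k" "k < K - D - e" using assms(9,10) la le by auto
  have E0: "\<And>x. K - D - a \<le> x \<Longrightarrow> x < K - D - e \<Longrightarrow>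
      air K D j x = 1 \<longleftrightarrow> (x - (K - D - a)) mod b = jR"
    using airE[of i K D j] assms(6,7) jK unfolding a_def b_def e_def jR lb[symmetric] la[symmetric]
    by (simp add: b_def)
  have kmod: "kR mod b = jR" using E0[OF krange] assms(5) kR by simp
  have KDe: "K - D - e = (K - D - a) + (a div b) * b" using aKD adec by linarith
  show ?thesis
  proof (intro conjI impI allI)
    assume H: "i \<le> lidx K D div 2 \<and> kR < (beta K D (2 * i) - 1) * lam K D (2 * int i)"
    then have H1: "kR + b < (a div b) * b" unfolding bet lb
      by (metis add.commute diff_mult_distrib less_diff_conv mult_1 zero_less_diff zero_less_mult_iff)
    have kb: "k + b < K - D - e" "K - D - a \<le> k + b" using H1 KDe kR krange by auto
    have "k + b - (K - D - a) = kR + b" using kR krange by simp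
    then have air1: "air K D j (k + b) = 1"
      using E0[OF kb(2) kb(1)] kmod by simp
    have least: "(LEAST k'. k < k' \<and> air K D j k' = 1) = k + b"
    proof (rule Least_equality)
      show "k < k + b \<and> air K D j (k + b) = 1" using bpos air1 by simp
    next
      fix y assume y: "k < y \<and> air K D j y = 1"
      show "k + b \<le> y"
      proof (rule ccontr)
        assume "\<not> k + b \<le> y"
        then have yl: "y < k + b" by simp
        have "K - D - a \<le> y" "y < K - D - e" using y yl kb krange by auto
        then have "(y - (K - D - a)) mod b = jR" using E0 y by blast
        moreover have "y - (K - D - a) = kR + (y - k)" using kR krange y by simp
        moreover have "(kR + (y - k)) mod b \<noteq> kR mod b" using y yl by (intro mod_shift) auto
        ultimately show False using kmod by simp
      qed
    qed
    show "\<exists>k'. k < k' \<and> air K D j k' = 1" using bpos air1 by (intro exI[of _ "k+b"]) simp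
    show "dright K D j k = lam K D (2 * int i)" unfolding dright_def least lb by simp
  next
    fix c d :: nat
    assume H: "i + 1 \<le> lidx K D div 2
            \<and> (beta K D (2 * i) - 1) * lam K D (2 * int i) \<le> kR
            \<and> kR < beta K D (2 * i) * lam K D (2 * int i)
            \<and> jR = c * lam K D (2 * int i + 1) + d \<and> d < lam K D (2 * int i + 1)"
    then have H2: "2*i + 2 \<le> lidx K D" "(a div b - 1) * b \<le> kR" "kR < (a div b) * b"
       "jR = c * e + d" "d < e" unfolding bet lb le by auto
    define g where "g = lamS K D (Suc (Suc (Suc (Suc (2*i)))))"
    have epos: "0 < e" unfolding e_def using lidx_pos[OF DK(2) DK(1)] H2 by simp
    have fpos: "0 < f" unfolding f_def using lidx_pos[OF DK(2) DK(1)] H2 by simp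
    have fe: "f = b mod e" unfolding f_def b_def e_def using lamS_mod epos e_def by simp
    have gf: "g = e mod f" unfolding g_def f_def e_def using lamS_mod fpos f_def by simp
    have eKD: "e \<le> K - D" unfolding e_def using anti0[of 0 "Suc i" K D] by simp
    have gle: "g \<le> e" using gf by simp
    have flt: "f < e" using fe epos by simp
    have fb: "f \<le> b" using fe by simp
    have bdec: "b = (b div e) * e + f" using fe by simp
    have edec: "e = (e div f) * f + g" using gf by simp
    have edf: "1 \<le> e div f" using flt fpos by (simp add: Suc_le_eq div_greater_zero_iff)
    have eg: "f \<le> e - g" using edec edf
      by (metis add_diff_cancel_right' mult_le_mono1 mult_1)
    have bet1: "1 \<le> a div b" 
    proof (rule ccontr)
      assume "\<not> 1 \<le> a div b" then have "a div b = 0" by simp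
      then show False using H2(3) by simp
    qed
    have "kR div b = a div b - 1"
      by (rule div_nat_eqI) (use H2 bet1 in \<open>auto simp: mult.commute\<close>)
    then have kRd: "kR = (a div b - 1) * b + jR" using kmod by (metis div_mult_mod_eq)
    obtain m where m: "a div b = Suc m" using bet1 by (cases "a div b") auto
    have kRm: "kR = m * b + jR" using kRd m by simp
    have KDm: "K - D - e = (K - D - a) + m * b + b" using KDe m by simp
    have kval: "k = (K - D - a) + kR" using kR krange by simp
    define k' where "k' = K - D - e + d"
    have cejR: "c * e \<le> jR" using H2 by simp
    have kk': "k' - k = b - c * e" "k < k'"
      using kval kRm KDm H2(4) jR(2) unfolding k'_def by linarith+
    have k'lt: "k' < K - D" using H2 eKD unfolding k'_def by simp
    have jb: "j = (K - b) + jR" using jR assms(7) lb by simp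
    have Kb: "b \<le> K" using bD DK by simp
    have O0: "\<And>x. jR < b - f \<Longrightarrow> K - D - e \<le> x \<Longrightarrow> x < K - D \<Longrightarrow>
        air K D j x = 1 \<longleftrightarrow> jR mod e = x - (K - D - e)"
    proof -
      fix x assume P: "jR < b - f" and x: "K - D - e \<le> x" "x < K - D"
      have "j < K - f" using P jb Kb fb by simp
      then show "air K D j x = 1 \<longleftrightarrow> jR mod e = x - (K - D - e)"
        using airO[of i K D j x] H2 assms(7) x jR(1) lb unfolding b_def e_def f_def by simp
    qed
    have E1: "\<And>x. \<not> jR < b - f \<Longrightarrow> K - D - e \<le> x \<Longrightarrow> x < K - D - g \<Longrightarrow>
        air K D j x = 1 \<longleftrightarrow> (x - (K - D - e)) mod f = jR - (b - f)"
    proof -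
      fix x assume P: "\<not> jR < b - f" and x: "K - D - e \<le> x" "x < K - D - g"
      have jf: "K - f \<le> j" using P jb Kb fb by simp
      have "j - (K - f) = jR - (b - f)" using P jb Kb fb by simp
      then show "air K D j x = 1 \<longleftrightarrow> (x - (K - D - e)) mod f = jR - (b - f)"
        using airE[of "Suc i" K D j x] H2 jf jK x unfolding e_def f_def g_def by simp
    qed
    have dcase: "\<not> jR < b - f \<Longrightarrow> d < f \<and> jR - (b - f) = d"
    proof -
      assume P: "\<not> jR < b - f"
      have "c * e < (b div e + 1) * e" using H2 jR(2) bdec flt by (simp add: algebra_simps)
      then have c1: "c < b div e + 1" using mult_less_cancel2 by blast
      have "(b div e) * e < (c + 1) * e" using P H2 bdec fb by (simp add: algebra_simps)
      then have c2: "b div e < c + 1" using mult_less_cancel2 by blast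
      have "c = b div e" using c1 c2 by simp
      then show "d < f \<and> jR - (b - f) = d" using H2 jR(2) bdec by auto
    qed
    have air': "air K D j k' = 1"
    proof (cases "jR < b - f")
      case True
      have "jR mod e = d" using H2 by simp
      then show ?thesis using O0[OF True _ k'lt] unfolding k'_def by simp
    next
      case False
      have kg: "k' < K - D - g" using dcase[OF False] eg k'lt eKD gle unfolding k'_def by linarith
      then show ?thesis using E1[OF False _ kg] dcase[OF False] unfolding k'_def by simp
    qed
    have least: "(LEAST k'. k < k' \<and> air K D j k' = 1) = k'"
    proof (rule Least_equality)
      show "k < k' \<and> air K D j k' = 1" using kk' air' by simp
    next
      fix y assume y: "k < y \<and> air K D j y = 1"
      show "k' \<le> y"
      proof (rule ccontr)
        assume "\<not> k' \<le> y"
        then have yl: "y < k'" by simp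
        show False
        proof (cases "y < K - D - e")
          case True
          have "K - D - a \<le> y" using y krange by auto
          then have "(y - (K - D - a)) mod b = jR" using E0 y True by blast
          moreover have "y - (K - D - a) = kR + (y - k)" using kR krange y by simp
          moreover have "y - k < b" using True kval kRm KDm bpos by linarith
          then have "(kR + (y - k)) mod b \<noteq> kR mod b" using y by (intro mod_shift) auto
          ultimately show False using kmod by simp
        next
          case False
          then have yb: "K - D - e \<le> y" "y - (K - D - e) < d" using yl unfolding k'_def by auto
          show False
          proof (cases "jR < b - f")
            case True
            have "jR mod e = d" using H2 by simp
            then show False using O0[OF True yb(1)] yl k'lt y yb(2) by simp
          next
            case P: False
            have "y < K - D - g" using dcase[OF P] eg k'lt yl eKD gle unfolding k'_def by linarith
            then have "(y - (K - D - e)) mod f = d" using E1[OF P yb(1)] dcase[OF P] y by simp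
            then show False using yb(2) dcase[OF P] by simp
          qed
        qed
      qed
    qed
    show "\<exists>k'. k < k' \<and> air K D j k' = 1" using kk' air' by blast
    show "int (dright K D j k) = int (lam K D (2 * int i)) - int c * int (lam K D (2 * int i + 1))"
      unfolding dright_def least lb le kk'(1) using cejR jR(2) by (simp add: of_nat_diff)
  qed
qed
end
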